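(* Let $n\ge2$, $\tau_1,\dots,\tau_n\in\mathbb{C}$, $\vartheta\notin-\mathbb{N}$ (and $\vartheta\neq0$). Then, as identities of formal power series in the variables $z_{j,k}$ ($1\le k<j\le n$): for $1\le r_1<r_2\le n-1$, $$\partial_{z_{r_2,r_1}}(\mathcal{X}_A)=\sum_{s=1}^{r_1}\tau_sP_{[s,r_1]}\,\mathcal{X}_A[s,r_2],$$ and for $r\in\{1,\dots,n-1\}$, $$\partial_{z_{n,r}}(\mathcal{X}_A)=\frac{\tau_n}{\vartheta}\sum_{s=1}^{r}\tau_sP_{[s,r]}\,\mathcal{X}_A[s,n].$$
   Context: $(c)_i=c(c+1)\cdots(c+i-1)$. $\Gamma_A=\bigoplus_{1\le j<i\le n}\mathbb{N}\epsilon_{i,j}$; for $\beta\in\Gamma_A$: $\beta_{\underline 1}=0$, $\beta_{\underline i}=\sum_{r=1}^{i-1}\beta_{i,r}$, $\beta_{\overline n}=0$, $\beta_{\overline j}=\sum_{s=j+1}^n\beta_{s,j}$, $\beta!=\prod\beta_{j,k}!$, $z^\beta=\prod z_{j,k}^{\beta_{j,k}}$. $\mathcal{X}_A=\mathcal{X}_A(\tau_1,\dots,\tau_n;\vartheta)\{z_{j,k}\}=\sum_{\beta\in\Gamma_A}\frac{\left[\prod_{s=1}^{n-1}(\tau_s-\beta_{\underline s})_{\beta_{\overline s}}\right](\tau_n)_{\beta_{\underline n}}}{\beta!\,(\vartheta)_{\beta_{\underline n}}}z^\beta$. For $1\le i<j\le n-1$, $\mathcal{X}_A[i,j]$ is $\mathcal{X}_A$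 with $\tau_i$ replaced by $\tau_i+1$ and $\tau_j$ by $\tau_j-1$; for $k\le n-1$, $\mathcal{X}_A[k,n]$ is $\mathcal{X}_A$ with $\tau_k\to\tau_k+1$, $\tau_n\to\tau_n+1$, $\vartheta\to\vartheta+1$ (and $\mathcal{X}_A[k,k]$, $\mathcal X_A[k,n]$ for the evident index ranges are defined by these rules). Path polynomials: for positive integers $k_1<k_2$, a path from $k_1$ to $k_2$ is a sequence $k_1=m_0<m_1<\cdots<m_r=k_2$, and $P_{[k_1,k_2]}=\sum_{\text{paths}}(-1)^rz_{m_1,m_0}z_{m_2,m_1}\cdots z_{m_r,m_{r-1}}$; $P_{[k,k]}=1$. *)

theory Defs
  imports Complex_Main
begin

text \<open>Formal power series in the variables z_{j,k} (1 <= k < j <= n) are represented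
by their coefficient functions: a multi-index beta is a function
(nat * nat) => nat (beta (j,k) is the exponent of z_{j,k}), and a series is a
map from multi-indices to complex coefficients.\<close>

type_synonym mindex = "nat \<times> nat \<Rightarrow> nat"
type_synonym fps_A = "mindex \<Rightarrow> complex"

definition idxA :: "nat \<Rightarrow> (nat \<times> nat) set" where
  "idxA n = {(j, k). 1 \<le> k \<and> k < j \<and> j \<le> n}"

definition GammaA :: "nat \<Rightarrow> mindex set" where
  "GammaA n = {\<beta>. \<forall>p. \<beta> p \<noteq> 0 \<longrightarrow> p \<in> idxA n}"

definition beta_under :: "mindex \<Rightarrow> nat \<Rightarrow> nat" where
  "beta_under \<beta> i = (\<Sum>r = 1..<i. \<beta> (i, r))"

definition beta_over :: "nat \<Rightarrow> mindex \<Rightarrow> nat \<Rightarrow> nat" where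
  "beta_over n \<beta> j = (\<Sum>s = j+1..n. \<beta> (s, j))"

definition beta_fact :: "nat \<Rightarrow> mindex \<Rightarrow> nat" where
  "beta_fact n \<beta> = (\<Prod>p\<in>idxA n. fact (\<beta> p))"

definition XA :: "nat \<Rightarrow> (nat \<Rightarrow> complex) \<Rightarrow> complex \<Rightarrow> fps_A" where
  "XA n \<tau> \<theta> \<beta> =
     (if \<beta> \<in> GammaA n then
        ((\<Prod>s = 1..n-1. pochhammer (\<tau> s - of_nat (beta_under \<beta> s)) (beta_over n \<beta> s))
          * pochhammer (\<tau> n) (beta_under \<beta> n))
        / (of_nat (beta_fact n \<beta>) * pochhammer \<theta> (beta_under \<beta> n))
      else 0)"

definition XA_shift :: "nat \<Rightarrow> (nat \<Rightarrow> complex) \<Rightarrow> complex \<Rightarrow> nat \<Rightarrow> nat \<Rightarrow> fps_A" where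
  "XA_shift n \<tau> \<theta> i j = XA n (\<tau>(i := \<tau> i + 1, j := \<tau> j - 1)) \<theta>"

definition XA_shift_n :: "nat \<Rightarrow> (nat \<Rightarrow> complex) \<Rightarrow> complex \<Rightarrow> nat \<Rightarrow> fps_A" where
  "XA_shift_n n \<tau> \<theta> k = XA n (\<tau>(k := \<tau> k + 1, n := \<tau> n + 1)) (\<theta> + 1)"

definition fps_deriv_A :: "nat \<times> nat \<Rightarrow> fps_A \<Rightarrow> fps_A" where
  "fps_deriv_A p F \<beta> = of_nat (\<beta> p + 1) * F (\<beta>(p := \<beta> p + 1))"

definition fps_mult_A :: "fps_A \<Rightarrow> fps_A \<Rightarrow> fps_A" where
  "fps_mult_A F G \<beta> = (\<Sum>\<gamma>\<in>{\<gamma>. \<forall>p. \<gamma> p \<le> \<beta> p}. F \<gamma> * G (\<lambda>p. \<beta> p - \<gamma> p))"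

definition fps_scale_A :: "complex \<Rightarrow> fps_A \<Rightarrow> fps_A" where
  "fps_scale_A c F \<beta> = c * F \<beta>"

definition fps_add_A :: "fps_A \<Rightarrow> fps_A \<Rightarrow> fps_A" where
  "fps_add_A F G \<beta> = F \<beta> + G \<beta>"

definition fps_sum_A :: "(nat \<Rightarrow> fps_A) \<Rightarrow> nat set \<Rightarrow> fps_A" where
  "fps_sum_A F S \<beta> = (\<Sum>s\<in>S. F s \<beta>)"

definition paths :: "nat \<Rightarrow> nat \<Rightarrow> nat list set" where
  "paths k1 k2 = {ms. ms \<noteq> [] \<and> hd ms = k1 \<and> last ms = k2 \<and> sorted_wrt (<) ms}"

text \<open>Exponent of the monomial z_{m_1,m_0} z_{m_2,m_1} ... z_{m_r,m_{r-1}}.\<close>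
definition path_exp :: "nat list \<Rightarrow> mindex" where
  "path_exp ms = (\<lambda>(j, k). length (filter (\<lambda>e. e = (k, j)) (zip ms (tl ms))))"

definition path_poly :: "nat \<Rightarrow> nat \<Rightarrow> fps_A" where
  "path_poly k1 k2 \<beta> = (\<Sum>ms\<in>{ms \<in> paths k1 k2. path_exp ms = \<beta>}. (-1) ^ (length ms - 1))"

end

theory Submission imports Defs begin

definition zmul :: "nat \<times> nat \<Rightarrow> fps_A \<Rightarrow> fps_A" where
  "zmul p F \<beta> = (if 1 \<le> \<beta> p then F (\<beta>(p := \<beta> p - 1)) else 0)"

lemma sorted_hd_le: "sorted_wrt (<) xs \<Longrightarrow> x \<in> set xs \<Longrightarrow> hd xs \<le> (x::nat)"
  by (induction xs) auto

lemma sorted_le_last: "sorted_wrt (<) xs \<Longrightarrow> x \<in> set xs \<Longrightarrow> x \<le> last (xs::nat list)"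
proof (induction xs)
  case Nil then show ?case by simp
next
  case (Cons a xs)
  then show ?case using last_in_set by (cases "xs = []") fastforce+
qed

lemma zip_tl_lt: "sorted_wrt (<) xs \<Longrightarrow> (a, b) \<in> set (zip xs (tl xs)) \<Longrightarrow> a < (b::nat)"
proof (induction xs)
  case Nil then show ?case by simp
next
  case (Cons x xs)
  show ?case
  proof (cases xs)
    case Nil with Cons show ?thesis by simp
  next
    case (Cons y ys)
    with Cons.prems Cons.IH show ?thesis by auto
  qed
qed

lemma zip_tl_set: "(a, b) \<in> set (zip xs (tl xs)) \<Longrightarrow> a \<in> set xs \<and> b \<in> set xs"
  by (metis in_set_zipE list.set_sel(2) tl_Nil)

lemma zip_snoc: "xs \<noteq> [] \<Longrightarrow> zip (xs @ [y]) (tl xs @ [y]) = zip xs (tl xs) @ [(last xs, y)]"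
proof (induction xs)
  case Nil then show ?case by simp
next
  case (Cons a xs)
  then show ?case by (cases xs) auto
qed

lemma paths_same: "paths s s = {[s]}"
proof -
  have "ms = [s]" if "ms \<in> paths s s" for ms
  proof (cases ms)
    case Nil with that show ?thesis by (simp add: paths_def)
  next
    case (Cons x ys)
    show ?thesis
    proof (cases ys)
      case Nil with Cons that show ?thesis by (simp add: paths_def)
    next
      case (Cons y zs)
      have "last ys \<in> set ys" using Cons by simp
      moreover have "sorted_wrt (<) (x # ys)" "x = s" "last ys = s"
        using that \<open>ms = x # ys\<close> Cons by (auto simp: paths_def)
      ultimately show ?thesis by auto
    qed
  qed
  then show ?thesis by (auto simp: paths_def)
qed

lemma paths_range: "ms \<in> paths s r \<Longrightarrow> x \<in> set ms \<Longrightarrow> s \<le> x \<and> x \<le> r"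
  unfolding paths_def using sorted_hd_le sorted_le_last by blast

lemma finite_paths: "finite (paths s r)"
proof -
  have "paths s r \<subseteq> {xs. set xs \<subseteq> {s..r} \<and> length xs \<le> card {s..r}}"
  proof
    fix ms assume m: "ms \<in> paths s r"
    then have st: "set ms \<subseteq> {s..r}" using paths_range by fastforce
    have "distinct ms" using m by (simp add: paths_def strict_sorted_iff)
    then have "length ms = card (set ms)" by (simp add: distinct_card)
    also have "\<dots> \<le> card {s..r}" using st by (metis card_mono finite_atLeastAtMost)
    finally show "ms \<in> {xs. set xs \<subseteq> {s..r} \<and> length xs \<le> card {s..r}}" using st by simp
  qed
  moreover have "finite {xs. set xs \<subseteq> {s..r} \<and> length xs \<le> card {s..r}}"
    by (rule finite_lists_length_le) simp
  ultimately show ?thesis by (rule finite_subset)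
qed

lemma paths_snoc:
  assumes "s < r1"
  shows "paths s r1 = (\<Union>r\<in>{s..<r1}. (\<lambda>ms. ms @ [r1]) ` paths s r)"
proof
  show "paths s r1 \<subseteq> (\<Union>r\<in>{s..<r1}. (\<lambda>ms. ms @ [r1]) ` paths s r)"
  proof
    fix ms assume m: "ms \<in> paths s r1"
    then have ne: "ms \<noteq> []" and h: "hd ms = s" and l: "last ms = r1" and so: "sorted_wrt (<) ms"
      by (auto simp: paths_def)
    have eq: "ms = butlast ms @ [r1]" using ne l by (metis append_butlast_last_id)
    have bne: "butlast ms \<noteq> []"
    proof
      assume "butlast ms = []"
      then have "ms = [r1]" using eq by (metis append_Nil)
      then show False using h assms by simp
    qed
    have "sorted_wrt (<) (butlast ms @ [r1])" using so eq by metis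
    then have sob: "sorted_wrt (<) (butlast ms)" and lt: "\<forall>x\<in>set (butlast ms). x < r1"
      by (simp_all add: sorted_wrt_append)
    have hb: "hd (butlast ms) = s" using h bne eq by (metis hd_append2)
    define r where "r = last (butlast ms)"
    have "r \<in> set (butlast ms)" using bne r_def by simp
    then have "r < r1" "s \<le> r" using lt sorted_hd_le[OF sob] hb by auto
    moreover have "butlast ms \<in> paths s r" using bne hb sob r_def by (simp add: paths_def)
    ultimately have "r \<in> {s..<r1}" "butlast ms @ [r1] \<in> (\<lambda>ms. ms @ [r1]) ` paths s r" by auto
    then show "ms \<in> (\<Union>r\<in>{s..<r1}. (\<lambda>ms. ms @ [r1]) ` paths s r)"
      using eq by (metis UN_I)
  qed
next
  show "(\<Union>r\<in>{s..<r1}. (\<lambda>ms. ms @ [r1]) ` paths s r) \<subseteq> paths s r1"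
  proof clarify
    fix r ms assume r: "r \<in> {s..<r1}" and m: "ms \<in> paths s r"
    have "\<forall>x\<in>set ms. x < r1" using paths_range[OF m] r by fastforce
    then show "ms @ [r1] \<in> paths s r1" using m by (auto simp: paths_def sorted_wrt_append)
  qed
qed

lemma path_exp_snoc:
  assumes "ms \<noteq> []"
  shows "path_exp (ms @ [y]) = (\<lambda>(j,k). path_exp ms (j,k) + (if (j,k) = (y, last ms) then 1 else 0))"
  using assms by (auto simp: path_exp_def zip_snoc fun_eq_iff)

lemma path_exp_zero:
  assumes "y \<notin> set ms"
  shows "path_exp ms (y, k) = 0"
  using assms zip_tl_set by (fastforce simp: path_exp_def filter_empty_conv)


lemma path_poly_same: "path_poly s s \<beta> = (if \<beta> = (\<lambda>_. 0) then 1 else 0)"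
proof -
  have "path_exp [s] = (\<lambda>_. 0)" by (auto simp: path_exp_def fun_eq_iff)
  then have "{ms \<in> paths s s. path_exp ms = \<beta>} = (if \<beta> = (\<lambda>_. 0) then {[s]} else {})"
    by (auto simp: paths_same)
  then show ?thesis by (simp add: path_poly_def)
qed

lemma path_exp_snoc1:
  assumes m: "ms \<in> paths s r" and r: "r < r1"
  shows "path_exp (ms @ [r1]) = (path_exp ms)((r1, r) := 1)"
proof -
  have ne: "ms \<noteq> []" and l: "last ms = r" using m by (auto simp: paths_def)
  have "r1 \<notin> set ms" using paths_range[OF m] r by fastforce
  then have z: "path_exp ms (r1, r) = 0" by (rule path_exp_zero)
  show ?thesis using z unfolding path_exp_snoc[OF ne] l by (auto simp: fun_eq_iff)
qed

lemma upd_one_iff: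
  assumes "f p = (0::nat)"
  shows "(f(p := 1) = \<beta>) \<longleftrightarrow> (1 \<le> \<beta> p \<and> f = \<beta>(p := \<beta> p - 1))"
proof
  assume h: "f(p := 1) = \<beta>"
  then have b1: "\<beta> p = 1" by auto
  have "\<forall>x. x \<noteq> p \<longrightarrow> f x = \<beta> x" using h by (metis fun_upd_other)
  then show "1 \<le> \<beta> p \<and> f = \<beta>(p := \<beta> p - 1)" using b1 assms by (auto simp: fun_eq_iff)
next
  assume h: "1 \<le> \<beta> p \<and> f = \<beta>(p := \<beta> p - 1)"
  then have "\<beta> p - 1 = 0" using assms by (metis fun_upd_same)
  then have "\<beta> p = 1" using h by simp
  then show "f(p := 1) = \<beta>" using h by (auto simp: fun_eq_iff)
qed

lemma path_poly_snoc:
  assumes "s < r1"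
  shows "path_poly s r1 \<beta> = - (\<Sum>r\<in>{s..<r1}. zmul (r1, r) (path_poly s r) \<beta>)"
proof -
  define A where "A r = {ms \<in> paths s r. path_exp (ms @ [r1]) = \<beta>}" for r
  have U: "{ms \<in> paths s r1. path_exp ms = \<beta>} = (\<Union>r\<in>{s..<r1}. (\<lambda>ms. ms @ [r1]) ` A r)"
    unfolding A_def paths_snoc[OF assms] by auto
  have fin: "finite (A r)" for r unfolding A_def using finite_paths by simp
  have disj: "((\<lambda>ms. ms @ [r1]) ` A r) \<inter> ((\<lambda>ms. ms @ [r1]) ` A r') = {}"
    if "r \<noteq> r'" for r r'
  proof -
    { fix ms ms' assume "ms \<in> A r" "ms' \<in> A r'" "ms @ [r1] = ms' @ [r1]"
      then have "last ms = r" "last ms' = r'" "ms = ms'" by (auto simp: A_def paths_def)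
      then have False using that by simp }
    then show ?thesis by blast
  qed
  have "path_poly s r1 \<beta> = (\<Sum>ms\<in>(\<Union>r\<in>{s..<r1}. (\<lambda>ms. ms @ [r1]) ` A r). (-1) ^ (length ms - 1))"
    unfolding path_poly_def U ..
  also have "\<dots> = (\<Sum>r\<in>{s..<r1}. \<Sum>ms\<in>(\<lambda>ms. ms @ [r1]) ` A r. (-1) ^ (length ms - 1))"
    by (rule sum.UNION_disjoint) (use fin disj in auto)
  also have "\<dots> = (\<Sum>r\<in>{s..<r1}. \<Sum>ms\<in>A r. (-1) ^ (length ms))"
  proof (rule sum.cong[OF refl])
    fix r
    have "inj_on (\<lambda>ms. ms @ [r1]) (A r)" by (auto simp: inj_on_def)
    then show "(\<Sum>ms\<in>(\<lambda>ms. ms @ [r1]) ` A r. (-1) ^ (length ms - 1)) = (\<Sum>ms\<in>A r. (-1::complex) ^ (length ms))"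
      by (simp add: sum.reindex)
  qed
  also have "\<dots> = (\<Sum>r\<in>{s..<r1}. - zmul (r1, r) (path_poly s r) \<beta>)"
  proof (rule sum.cong[OF refl])
    fix r assume r: "r \<in> {s..<r1}"
    have Ar: "A r = (if 1 \<le> \<beta> (r1, r) then {ms \<in> paths s r. path_exp ms = \<beta>((r1, r) := \<beta> (r1, r) - 1)} else {})"
    proof -
      { fix ms assume m: "ms \<in> paths s r"
        have "r1 \<notin> set ms" using paths_range[OF m] r by fastforce
        then have z: "path_exp ms (r1, r) = 0" by (rule path_exp_zero)
        have "path_exp (ms @ [r1]) = \<beta> \<longleftrightarrow> (1 \<le> \<beta> (r1, r) \<and> path_exp ms = \<beta>((r1, r) := \<beta> (r1, r) - 1))"
          using path_exp_snoc1[OF m, of r1] r upd_one_iff[of "path_exp ms" "(r1, r)", OF z] by simp }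
      then show ?thesis unfolding A_def by auto
    qed
    have len: "ms \<in> paths s r \<Longrightarrow> (-1::complex) ^ length ms = - ((-1) ^ (length ms - 1))" for ms
      by (cases ms) (auto simp: paths_def)
    show "(\<Sum>ms\<in>A r. (-1::complex) ^ (length ms)) = - zmul (r1, r) (path_poly s r) \<beta>"
      unfolding Ar zmul_def path_poly_def using len by (auto simp: sum_negf)
  qed
  finally show ?thesis by (simp add: sum_negf)
qed

lemma finite_idxA: "finite (idxA n)"
proof -
  have "idxA n \<subseteq> {1..n} \<times> {1..n}" by (auto simp: idxA_def)
  then show ?thesis by (rule finite_subset) simp
qed

lemma GammaA_finite_le:
  assumes "\<beta> \<in> GammaA n"
  shows "finite {\<gamma>. \<forall>p. \<gamma> p \<le> \<beta> p}"
proof -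
  let ?M = "\<Sum>p\<in>idxA n. \<beta> p"
  have "{\<gamma>. \<forall>p. \<gamma> p \<le> \<beta> p} \<subseteq> {f. \<forall>x. (x \<in> idxA n \<longrightarrow> f x \<in> {..?M}) \<and> (x \<notin> idxA n \<longrightarrow> f x = 0)}"
  proof clarify
    fix \<gamma> x assume g: "\<forall>p. \<gamma> p \<le> \<beta> p"
    show "(x \<in> idxA n \<longrightarrow> \<gamma> x \<in> {..?M}) \<and> (x \<notin> idxA n \<longrightarrow> \<gamma> x = 0)"
    proof (intro conjI impI)
      assume "x \<in> idxA n"
      then have "\<beta> x \<le> ?M" by (intro member_le_sum) (auto simp: finite_idxA)
      then show "\<gamma> x \<in> {..?M}" using g[rule_format, of x] by simp
    next
      assume "x \<notin> idxA n"
      then have "\<beta> x = 0" using assms unfolding GammaA_def by blast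
      then show "\<gamma> x = 0" using g[rule_format, of x] by simp
    qed
  qed
  moreover have "finite {f. \<forall>x. (x \<in> idxA n \<longrightarrow> f x \<in> {..?M}) \<and> (x \<notin> idxA n \<longrightarrow> f x = (0::nat))}"
    by (rule finite_set_of_finite_funs) (auto simp: finite_idxA)
  ultimately show ?thesis by (rule finite_subset)
qed

lemma GammaA_upd: "p \<in> idxA n \<Longrightarrow> (\<beta>(p := v) \<in> GammaA n) = (\<beta> \<in> GammaA n)"
  by (auto simp: GammaA_def split: if_splits)

lemma GammaA_dec: "\<beta> \<in> GammaA n \<Longrightarrow> \<beta>(p := \<beta> p - 1) \<in> GammaA n"
  by (auto simp: GammaA_def split: if_splits)

lemma mult_zmul:
  assumes b: "\<beta> \<in> GammaA n"
  shows "fps_mult_A (zmul p F) G \<beta> = zmul p (fps_mult_A F G) \<beta>"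
proof (cases "\<beta> p = 0")
  case True
  have *: "zmul p F \<gamma> * G (\<lambda>q. \<beta> q - \<gamma> q) = 0" if "\<forall>q. \<gamma> q \<le> \<beta> q" for \<gamma>
    using that[rule_format, of p] True by (simp add: zmul_def)
  have "fps_mult_A (zmul p F) G \<beta> = 0" unfolding fps_mult_A_def
    by (rule sum.neutral) (use * in blast)
  moreover have "zmul p (fps_mult_A F G) \<beta> = 0" using True by (simp add: zmul_def)
  ultimately show ?thesis by simp
next
  case False
  define \<beta>' where "\<beta>' = \<beta>(p := \<beta> p - 1)"
  have fin: "finite {\<gamma>. \<forall>q. \<gamma> q \<le> \<beta> q}" using GammaA_finite_le[OF b] .
  have "fps_mult_A (zmul p F) G \<beta> =
      (\<Sum>\<gamma>\<in>{\<gamma>. \<forall>q. \<gamma> q \<le> \<beta> q}. if 1 \<le> \<gamma> p then F (\<gamma>(p := \<gamma> p - 1)) * G (\<lambda>q. \<beta> q - \<gamma> q) else 0)"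
    unfolding fps_mult_A_def zmul_def by (rule sum.cong) auto
  also have "\<dots> = (\<Sum>\<gamma>\<in>{\<gamma> \<in> {\<gamma>. \<forall>q. \<gamma> q \<le> \<beta> q}. 1 \<le> \<gamma> p}. F (\<gamma>(p := \<gamma> p - 1)) * G (\<lambda>q. \<beta> q - \<gamma> q))"
    by (rule sum.inter_filter[symmetric, OF fin])
  also have "\<dots> = (\<Sum>\<gamma>\<in>{\<gamma>. \<forall>q. \<gamma> q \<le> \<beta>' q}. F \<gamma> * G (\<lambda>q. \<beta>' q - \<gamma> q))"
  proof (rule sum.reindex_bij_witness[where j = "\<lambda>\<gamma>. \<gamma>(p := \<gamma> p - 1)" and i = "\<lambda>\<gamma>. \<gamma>(p := \<gamma> p + 1)"])
    fix a assume a: "a \<in> {\<gamma> \<in> {\<gamma>. \<forall>q. \<gamma> q \<le> \<beta> q}. 1 \<le> \<gamma> p}"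
    then show "(a(p := a p - 1))(p := (a(p := a p - 1)) p + 1) = a" by (auto simp: fun_eq_iff)
    have ab: "\<And>q. a q \<le> \<beta> q" using a by blast
    have "(a(p := a p - 1)) q \<le> \<beta>' q" for q
      using ab[of q] ab[of p] diff_le_mono[of "a p" "\<beta> p" 1] by (auto simp: \<beta>'_def)
    then show "a(p := a p - 1) \<in> {\<gamma>. \<forall>q. \<gamma> q \<le> \<beta>' q}" by simp
    have "(\<lambda>q. \<beta>' q - (a(p := a p - 1)) q) = (\<lambda>q. \<beta> q - a q)"
      using a by (auto simp: \<beta>'_def fun_eq_iff)
    then show "F (a(p := a p - 1)) * G (\<lambda>q. \<beta>' q - (a(p := a p - 1)) q) = F (a(p := a p - 1)) * G (\<lambda>q. \<beta> q - a q)"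
      by simp
  next
    fix b assume bb: "b \<in> {\<gamma>. \<forall>q. \<gamma> q \<le> \<beta>' q}"
    then show "(b(p := b p + 1))(p := (b(p := b p + 1)) p - 1) = b" by (auto simp: fun_eq_iff)
    show "b(p := b p + 1) \<in> {\<gamma> \<in> {\<gamma>. \<forall>q. \<gamma> q \<le> \<beta> q}. 1 \<le> \<gamma> p}"
    proof -
      have bq: "\<And>q. b q \<le> \<beta>' q" using bb by blast
      have "(b(p := b p + 1)) q \<le> \<beta> q" for q
        using bq[of q] bq[of p] False by (auto simp: \<beta>'_def split: if_splits)
      then show ?thesis by simp
    qed
  qed
  also have "\<dots> = zmul p (fps_mult_A F G) \<beta>"
    using False by (simp add: zmul_def fps_mult_A_def \<beta>'_def)
  finally show ?thesis .
qed

lemma mult_sum_left: "fps_mult_A (\<lambda>\<gamma>. \<Sum>r\<in>R. F r \<gamma>) G \<beta> = (\<Sum>r\<in>R. fps_mult_A (F r) G \<beta>)"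
  unfolding fps_mult_A_def by (simp add: sum_distrib_right) (rule sum.swap)

lemma mult_neg_left: "fps_mult_A (\<lambda>\<gamma>. - F \<gamma>) G \<beta> = - fps_mult_A F G \<beta>"
  unfolding fps_mult_A_def by (simp add: sum_negf)

lemma mult_unit:
  assumes b: "\<beta> \<in> GammaA n"
  shows "fps_mult_A (path_poly s s) G \<beta> = G \<beta>"
proof -
  have fin: "finite {\<gamma>. \<forall>q. \<gamma> q \<le> \<beta> q}" using GammaA_finite_le[OF b] .
  have "fps_mult_A (path_poly s s) G \<beta> = (\<Sum>\<gamma>\<in>{\<gamma>. \<forall>q. \<gamma> q \<le> \<beta> q}. if \<gamma> = (\<lambda>_. 0) then G \<beta> else 0)"
    unfolding fps_mult_A_def path_poly_same by (rule sum.cong) auto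
  also have "\<dots> = G \<beta>" using fin by (simp add: sum.delta')
  finally show ?thesis .
qed

lemma zmul_sum: "zmul p (\<lambda>\<gamma>. \<Sum>r\<in>R. F r \<gamma>) \<beta> = (\<Sum>r\<in>R. zmul p (F r) \<beta>)"
  by (simp add: zmul_def)


lemma inversion:
  fixes D V :: "nat \<Rightarrow> fps_A"
  assumes hyp: "\<And>s \<beta>. 1 \<le> s \<Longrightarrow> s < t \<Longrightarrow> \<beta> \<in> GammaA n \<Longrightarrow>
      V s \<beta> = D s \<beta> + (\<Sum>r\<in>{1..<s}. zmul (s, r) (D r) \<beta>)"
  shows "1 \<le> r1 \<Longrightarrow> r1 < t \<Longrightarrow> \<beta> \<in> GammaA n \<Longrightarrow>
      D r1 \<beta> = (\<Sum>s\<in>{1..r1}. fps_mult_A (path_poly s r1) (V s) \<beta>)"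
proof (induction r1 arbitrary: \<beta> rule: less_induct)
  case (less r1)
  define M where "M s r = fps_mult_A (zmul (r1, r) (path_poly s r)) (V s) \<beta>" for s r
  have step: "zmul (r1, r) (D r) \<beta> = (\<Sum>s\<in>{1..r}. M s r)" if r: "r \<in> {1..<r1}" for r
  proof -
    have "zmul (r1, r) (D r) \<beta> = zmul (r1, r) (\<lambda>\<gamma>. \<Sum>s\<in>{1..r}. fps_mult_A (path_poly s r) (V s) \<gamma>) \<beta>"
      unfolding zmul_def using less.IH[of r] r less.prems GammaA_dec by auto
    also have "\<dots> = (\<Sum>s\<in>{1..r}. zmul (r1, r) (fps_mult_A (path_poly s r) (V s)) \<beta>)"
      by (rule zmul_sum)
    also have "\<dots> = (\<Sum>s\<in>{1..r}. M s r)" unfolding M_def using mult_zmul[OF less.prems(3)] by simp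
    finally show ?thesis .
  qed
  have "D r1 \<beta> = V r1 \<beta> - (\<Sum>r\<in>{1..<r1}. zmul (r1, r) (D r) \<beta>)" using hyp[OF less.prems] by simp
  also have "(\<Sum>r\<in>{1..<r1}. zmul (r1, r) (D r) \<beta>) = (\<Sum>r\<in>{1..<r1}. \<Sum>s\<in>{1..r}. M s r)"
    using step by (rule sum.cong[OF refl])
  also have "\<dots> = (\<Sum>r\<in>{1..<r1}. \<Sum>s\<in>{s \<in> {1..<r1}. s \<le> r}. M s r)"
    by (rule sum.cong[OF refl], rule sum.cong) auto
  also have "\<dots> = (\<Sum>s\<in>{1..<r1}. \<Sum>r\<in>{r \<in> {1..<r1}. s \<le> r}. M s r)"
    by (rule sum.swap_restrict) auto
  also have "\<dots> = (\<Sum>s\<in>{1..<r1}. - fps_mult_A (path_poly s r1) (V s) \<beta>)"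
  proof (rule sum.cong[OF refl])
    fix s assume s: "s \<in> {1..<r1}"
    have "(\<Sum>r\<in>{r \<in> {1..<r1}. s \<le> r}. M s r) = (\<Sum>r\<in>{s..<r1}. M s r)"
      using s by (intro sum.cong) auto
    also have "\<dots> = fps_mult_A (\<lambda>\<gamma>. \<Sum>r\<in>{s..<r1}. zmul (r1, r) (path_poly s r) \<gamma>) (V s) \<beta>"
      unfolding M_def by (rule mult_sum_left[symmetric])
    also have "\<dots> = fps_mult_A (\<lambda>\<gamma>. - path_poly s r1 \<gamma>) (V s) \<beta>"
      using path_poly_snoc[of s r1] s by simp
    also have "\<dots> = - fps_mult_A (path_poly s r1) (V s) \<beta>" by (rule mult_neg_left)
    finally show "(\<Sum>r\<in>{r \<in> {1..<r1}. s \<le> r}. M s r) = - fps_mult_A (path_poly s r1) (V s) \<beta>" .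
  qed
  finally have "D r1 \<beta> = V r1 \<beta> + (\<Sum>s\<in>{1..<r1}. fps_mult_A (path_poly s r1) (V s) \<beta>)"
    by (simp add: sum_negf)
  also have "V r1 \<beta> = fps_mult_A (path_poly r1 r1) (V r1) \<beta>"
    using mult_unit[OF less.prems(3)] by simp
  also have "{1..r1} = insert r1 {1..<r1}" using less.prems by auto
  ultimately show ?case by simp
qed


lemma under_inc:
  "beta_under (\<beta>((a, b) := \<beta> (a, b) + 1)) i = beta_under \<beta> i + (if i = a \<and> 1 \<le> b \<and> b < i then 1 else 0)"
proof -
  have "(\<Sum>r = 1..<i. (\<beta>((a, b) := \<beta> (a, b) + 1)) (i, r)) = (\<Sum>r = 1..<i. \<beta> (i, r) + (if r = b then (if i = a then 1 else 0) else 0))"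
    by (rule sum.cong) auto
  also have "\<dots> = (\<Sum>r = 1..<i. \<beta> (i, r)) + (if i = a \<and> 1 \<le> b \<and> b < i then 1 else 0)"
    by (simp add: sum.distrib)
  finally show ?thesis by (simp add: beta_under_def)
qed

lemma over_inc:
  "beta_over n (\<beta>((a, b) := \<beta> (a, b) + 1)) j = beta_over n \<beta> j + (if j = b \<and> j < a \<and> a \<le> n then 1 else 0)"
proof -
  have "(\<Sum>s = j+1..n. (\<beta>((a, b) := \<beta> (a, b) + 1)) (s, j)) = (\<Sum>s = j+1..n. \<beta> (s, j) + (if s = a then (if j = b then 1 else 0) else 0))"
    by (rule sum.cong) auto
  also have "\<dots> = (\<Sum>s = j+1..n. \<beta> (s, j)) + (if j = b \<and> j < a \<and> a \<le> n then 1 else 0)"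
    by (simp add: sum.distrib)
  finally show ?thesis by (simp add: beta_over_def)
qed

lemma fact_inc:
  assumes "(a, b) \<in> idxA n"
  shows "beta_fact n (\<beta>((a, b) := \<beta> (a, b) + 1)) = beta_fact n \<beta> * (\<beta> (a, b) + 1)"
proof -
  let ?b1 = "\<beta>((a, b) := \<beta> (a, b) + 1)"
  let ?R = "\<Prod>p\<in>idxA n - {(a, b)}. fact (\<beta> p)"
  have "beta_fact n ?b1 = fact (?b1 (a, b)) * (\<Prod>p\<in>idxA n - {(a, b)}. fact (?b1 p))"
    unfolding beta_fact_def by (rule prod.remove[OF finite_idxA assms])
  also have "(\<Prod>p\<in>idxA n - {(a, b)}. fact (?b1 p)) = ?R"
    by (rule prod.cong) auto
  finally have e1: "beta_fact n ?b1 = fact (\<beta> (a, b) + 1) * ?R" by (simp only: fun_upd_same)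
  have e2: "beta_fact n \<beta> = fact (\<beta> (a, b)) * ?R"
    unfolding beta_fact_def by (rule prod.remove[OF finite_idxA assms])
  show ?thesis unfolding e1 e2 by (simp add: algebra_simps)
qed

lemma dec_inc: "1 \<le> (\<beta>::mindex) p \<Longrightarrow> (\<beta>(p := \<beta> p - 1))(p := (\<beta>(p := \<beta> p - 1)) p + 1) = \<beta>"
  by (auto simp: fun_eq_iff)

lemma prod_split2:
  assumes "finite J" "s \<in> J" "t \<in> J" "s \<noteq> t" "\<And>j. j \<in> J - {s, t} \<Longrightarrow> f j = g j"
  shows "prod f J = f s * f t * prod g (J - {s, t})"
proof -
  have "prod f J = f s * prod f (J - {s})" using assms by (intro prod.remove)
  also have "prod f (J - {s}) = f t * prod f (J - {s} - {t})" using assms by (intro prod.remove) auto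
  also have "prod f (J - {s} - {t}) = prod g (J - {s, t})"
    using assms by (intro prod.cong) auto
  finally show ?thesis by (simp add: mult.assoc)
qed

lemma prod_split1:
  assumes "finite J" "s \<in> J" "\<And>j. j \<in> J - {s} \<Longrightarrow> f j = g j"
  shows "prod f J = f s * prod g (J - {s})"
proof -
  have "prod f J = f s * prod f (J - {s})" using assms by (intro prod.remove)
  also have "prod f (J - {s}) = prod g (J - {s})" using assms by (intro prod.cong) auto
  finally show ?thesis .
qed


lemma under_dec:
  assumes "1 \<le> \<beta> (a, b)"
  shows "beta_under (\<beta>((a, b) := \<beta> (a, b) - 1)) i + (if i = a \<and> 1 \<le> b \<and> b < i then 1 else 0) = beta_under \<beta> i"
  using under_inc[of "\<beta>((a, b) := \<beta> (a, b) - 1)" a b i] dec_inc[of \<beta> "(a,b)", OF assms] by simp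

lemma over_dec:
  assumes "1 \<le> \<beta> (a, b)"
  shows "beta_over n (\<beta>((a, b) := \<beta> (a, b) - 1)) j + (if j = b \<and> j < a \<and> a \<le> n then 1 else 0) = beta_over n \<beta> j"
  using over_inc[of n "\<beta>((a, b) := \<beta> (a, b) - 1)" a b j] dec_inc[of \<beta> "(a,b)", OF assms] by simp

lemma fact_dec:
  assumes "1 \<le> \<beta> (a, b)" "(a, b) \<in> idxA n"
  shows "beta_fact n (\<beta>((a, b) := \<beta> (a, b) - 1)) * \<beta> (a, b) = beta_fact n \<beta>"
  using fact_inc[OF assms(2), of "\<beta>((a, b) := \<beta> (a, b) - 1)"] dec_inc[of \<beta> "(a,b)", OF assms(1)] assms(1)
  by simp

lemma XA_in: "\<beta> \<in> GammaA n \<Longrightarrow> XA n \<tau> \<theta> \<beta> =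
   ((\<Prod>s = 1..n-1. pochhammer (\<tau> s - of_nat (beta_under \<beta> s)) (beta_over n \<beta> s))
          * pochhammer (\<tau> n) (beta_under \<beta> n))
        / (of_nat (beta_fact n \<beta>) * pochhammer \<theta> (beta_under \<beta> n))"
  by (simp add: XA_def)

lemma fid: "(y::complex) \<noteq> 0 \<Longrightarrow> P * bt * Q * pn / (of_nat f * X * pth) = P * (bt * Q * pn / (of_nat f * y * pth)) * y / X"
  by (simp add: divide_inverse inverse_mult_distrib mult_ac)

lemma contig1:
  fixes \<tau> :: "nat \<Rightarrow> complex"
  assumes s1: "1 \<le> s" and st: "s < t" and tn: "t < n" and b: "\<beta> \<in> GammaA n"
  shows "\<tau> s * XA n (\<tau>(s := \<tau> s + 1, t := \<tau> t - 1)) \<theta> \<beta> =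
         fps_deriv_A (t, s) (XA n \<tau> \<theta>) \<beta> + (\<Sum>r\<in>{1..<s}. zmul (s, r) (fps_deriv_A (t, r) (XA n \<tau> \<theta>)) \<beta>)"
proof -
  define J where "J = {1..n-1}"
  define U where "U = beta_under \<beta>"
  define Ov where "Ov = beta_over n \<beta>"
  define F where "F = beta_fact n \<beta>"
  define pn where "pn = pochhammer (\<tau> n) (U n)"
  define pth where "pth = pochhammer \<theta> (U n)"
  define a where "a = \<tau> s - of_nat (U s)"
  define bt where "bt = pochhammer (\<tau> t - of_nat (U t) - 1) (Ov t)"
  define Q where "Q = (\<Prod>j\<in>J - {s, t}. pochhammer (\<tau> j - of_nat (U j)) (Ov j))"
  define K where "K = bt * Q * pn / (of_nat F * pth)"
  define \<tau>' where "\<tau>' = \<tau>(s := \<tau> s + 1, t := \<tau> t - 1)"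
  have fin: "finite J" and sJ: "s \<in> J" and tJ: "t \<in> J" and snt: "s \<noteq> t"
    using s1 st tn by (auto simp: J_def)
  have "XA n \<tau>' \<theta> \<beta> = (pochhammer (\<tau>' s - of_nat (U s)) (Ov s) * pochhammer (\<tau>' t - of_nat (U t)) (Ov t) * Q
        * pochhammer (\<tau>' n) (U n)) / (of_nat F * pth)"
    unfolding XA_in[OF b] J_def[symmetric] U_def[symmetric] Ov_def[symmetric] F_def[symmetric] pth_def[symmetric]
    by (subst prod_split2[OF fin sJ tJ snt, where g = "\<lambda>j. pochhammer (\<tau> j - of_nat (U j)) (Ov j)"])
       (auto simp: \<tau>'_def Q_def J_def)
  also have "\<dots> = pochhammer (a + 1) (Ov s) * K"
    using snt st tn by (simp add: \<tau>'_def a_def K_def bt_def pn_def algebra_simps)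
  finally have L: "XA n \<tau>' \<theta> \<beta> = pochhammer (a + 1) (Ov s) * K" .

  define \<beta>1 where "\<beta>1 = \<beta>((t, s) := \<beta> (t, s) + 1)"
  have pidx: "(t, s) \<in> idxA n" using s1 st tn by (auto simp: idxA_def)
  have b1: "\<beta>1 \<in> GammaA n" unfolding \<beta>1_def using GammaA_upd[OF pidx] b by simp
  have U1: "beta_under \<beta>1 j = U j + (if j = t then 1 else 0)" for j
    unfolding \<beta>1_def U_def under_inc using s1 st by auto
  have O1: "beta_over n \<beta>1 j = Ov j + (if j = s then 1 else 0)" for j
    unfolding \<beta>1_def Ov_def over_inc using s1 st tn by auto
  have F1: "beta_fact n \<beta>1 = F * (\<beta> (t, s) + 1)"
    unfolding \<beta>1_def F_def using fact_inc[OF pidx] .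
  have "XA n \<tau> \<theta> \<beta>1 = (pochhammer (\<tau> s - of_nat (U s)) (Ov s + 1) * pochhammer (\<tau> t - of_nat (U t + 1)) (Ov t) * Q
        * pn) / (of_nat (F * (\<beta> (t, s) + 1)) * pth)"
    unfolding XA_in[OF b1] J_def[symmetric] U1 O1 F1
    by (subst prod_split2[OF fin sJ tJ snt, where g = "\<lambda>j. pochhammer (\<tau> j - of_nat (U j)) (Ov j)"])
       (use snt tn in \<open>auto simp: Q_def J_def pn_def pth_def\<close>)
  also have "\<dots> = pochhammer a (Ov s + 1) * K / of_nat (\<beta> (t, s) + 1)"
    by (simp add: a_def K_def bt_def algebra_simps)
  moreover have nz: "1 + (of_nat (\<beta> (t, s)) :: complex) \<noteq> 0" by (metis of_nat_Suc of_nat_neq_0)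
  ultimately have "fps_deriv_A (t, s) (XA n \<tau> \<theta>) \<beta> = pochhammer a (Ov s + 1) * K"
    unfolding fps_deriv_A_def \<beta>1_def[symmetric] by simp
  note A = this

  have B: "zmul (s, r) (fps_deriv_A (t, r) (XA n \<tau> \<theta>)) \<beta> = of_nat (\<beta> (s, r)) * (pochhammer (a + 1) (Ov s) * K)"
    if r: "r \<in> {1..<s}" for r
  proof (cases "\<beta> (s, r) = 0")
    case True then show ?thesis by (simp add: zmul_def)
  next
    case False
    then have bsr: "1 \<le> \<beta> (s, r)" by simp
    define \<gamma> where "\<gamma> = \<beta>((s, r) := \<beta> (s, r) - 1)"
    define \<beta>2 where "\<beta>2 = \<gamma>((t, r) := \<gamma> (t, r) + 1)"
    have sidx: "(s, r) \<in> idxA n" and tidx: "(t, r) \<in> idxA n" using r st tn by (auto simp: idxA_def)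
    have gb: "\<gamma> \<in> GammaA n" unfolding \<gamma>_def using GammaA_upd[OF sidx] b by simp
    have b2: "\<beta>2 \<in> GammaA n" unfolding \<beta>2_def using GammaA_upd[OF tidx] gb by simp
    have gtr: "\<gamma> (t, r) = \<beta> (t, r)" using snt by (simp add: \<gamma>_def)
    have Ug: "beta_under \<gamma> j + (if j = s then 1 else 0) = U j" for j
      unfolding \<gamma>_def U_def using under_dec[of \<beta> s r j, OF bsr] r by auto
    have U2: "beta_under \<beta>2 j = beta_under \<gamma> j + (if j = t then 1 else 0)" for j
      unfolding \<beta>2_def under_inc using r st by auto
    have Og: "beta_over n \<gamma> j + (if j = r then 1 else 0) = Ov j" for j
      unfolding \<gamma>_def Ov_def using over_dec[of \<beta> s r n j, OF bsr] r st tn by auto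
    have O2: "beta_over n \<beta>2 j = Ov j" for j
      unfolding \<beta>2_def over_inc using Og[of j] r st tn by auto
    have Fg: "beta_fact n \<gamma> * \<beta> (s, r) = F"
      unfolding \<gamma>_def F_def by (rule fact_dec[of \<beta> s r n, OF bsr sidx])
    have F2: "beta_fact n \<beta>2 = beta_fact n \<gamma> * (\<beta> (t, r) + 1)"
      unfolding \<beta>2_def using fact_inc[OF tidx, of \<gamma>] gtr by simp
    have U2s: "beta_under \<beta>2 s = beta_under \<gamma> s" and U2t: "beta_under \<beta>2 t = U t + 1"
      and U2n: "beta_under \<beta>2 n = U n"
      using U2[of s] U2[of t] U2[of n] Ug[of t] Ug[of n] snt st tn by auto
    have U2o: "beta_under \<beta>2 j = U j" if "j \<in> J - {s, t}" for j
      using U2[of j] Ug[of j] that by auto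
    have Usg: "of_nat (U s) = (of_nat (beta_under \<gamma> s) :: complex) + 1"
    proof -
      have "U s = beta_under \<gamma> s + 1" using Ug[of s] by simp
      then show ?thesis by simp
    qed
    have "XA n \<tau> \<theta> \<beta>2 = (pochhammer (\<tau> s - of_nat (beta_under \<gamma> s)) (Ov s) * pochhammer (\<tau> t - of_nat (U t + 1)) (Ov t) * Q
        * pn) / (of_nat (beta_fact n \<gamma> * (\<beta> (t, r) + 1)) * pth)"
      unfolding XA_in[OF b2] J_def[symmetric] O2 F2 U2n U2s
      by (subst prod_split2[OF fin sJ tJ snt, where g = "\<lambda>j. pochhammer (\<tau> j - of_nat (U j)) (Ov j)"])
         (use U2o U2t U2s in \<open>auto simp: Q_def pn_def pth_def\<close>)
    also have "\<dots> = pochhammer (a + 1) (Ov s) * K * of_nat (\<beta> (s, r)) / of_nat (\<beta> (t, r) + 1)"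
    proof -
      have e1: "\<tau> s - of_nat (beta_under \<gamma> s) = a + 1" using Usg by (simp add: a_def)
      have e2: "\<tau> t - of_nat (U t + 1) = \<tau> t - of_nat (U t) - 1" by simp
      have e3: "(of_nat F :: complex) = of_nat (beta_fact n \<gamma>) * of_nat (\<beta> (s, r))"
        using Fg by (metis of_nat_mult)
      have nz0: "(of_nat (\<beta> (s, r)) :: complex) \<noteq> 0" using False by simp
      show ?thesis unfolding e1 e2 bt_def[symmetric] K_def e3 of_nat_mult
        by (rule fid[OF nz0])
    qed
    finally have X2: "XA n \<tau> \<theta> \<beta>2 = pochhammer (a + 1) (Ov s) * K * of_nat (\<beta> (s, r)) / of_nat (\<beta> (t, r) + 1)" .
    have nz: "(of_nat (\<beta> (t, r) + 1) :: complex) \<noteq> 0" by (metis of_nat_Suc of_nat_neq_0 Suc_eq_plus1)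
    have "zmul (s, r) (fps_deriv_A (t, r) (XA n \<tau> \<theta>)) \<beta> = fps_deriv_A (t, r) (XA n \<tau> \<theta>) \<gamma>"
      using bsr unfolding zmul_def \<gamma>_def by simp
    also have "\<dots> = of_nat (\<gamma> (t, r) + 1) * XA n \<tau> \<theta> \<beta>2"
      unfolding fps_deriv_A_def \<beta>2_def ..
    also have "\<dots> = of_nat (\<beta> (t, r) + 1) * XA n \<tau> \<theta> \<beta>2" using gtr by simp
    also have "\<dots> = of_nat (\<beta> (s, r)) * (pochhammer (a + 1) (Ov s) * K)"
      unfolding X2 using nz by (simp add: field_simps)
    finally show ?thesis .
  qed
  have "(\<Sum>r\<in>{1..<s}. zmul (s, r) (fps_deriv_A (t, r) (XA n \<tau> \<theta>)) \<beta>)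
      = (\<Sum>r\<in>{1..<s}. of_nat (\<beta> (s, r)) * (pochhammer (a + 1) (Ov s) * K))"
    using B by (rule sum.cong[OF refl])
  also have "\<dots> = of_nat (U s) * (pochhammer (a + 1) (Ov s) * K)"
    by (simp add: U_def beta_under_def sum_distrib_right)
  finally have S: "(\<Sum>r\<in>{1..<s}. zmul (s, r) (fps_deriv_A (t, r) (XA n \<tau> \<theta>)) \<beta>)
      = of_nat (U s) * (pochhammer (a + 1) (Ov s) * K)" .
  have "\<tau> s * XA n \<tau>' \<theta> \<beta> = (a + of_nat (U s)) * pochhammer (a + 1) (Ov s) * K"
    unfolding L by (simp add: a_def)
  also have "\<dots> = pochhammer a (Ov s + 1) * K + of_nat (U s) * (pochhammer (a + 1) (Ov s) * K)"
    by (simp add: pochhammer_rec algebra_simps)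
  finally show ?thesis unfolding A S \<tau>'_def .
qed


lemma fid2: "(y::complex) \<noteq> 0 \<Longrightarrow> P * Q * pn / (of_nat f * X * pth) = P * (Q * pn / (of_nat f * y * pth)) * y / X"
  by (simp add: divide_inverse inverse_mult_distrib mult_ac)

lemma fid3: "(tn / th) * ((P::complex) * Q * pn / (F * pth)) = P * (Q * (tn * pn) / (F * (th * pth)))"
  by (simp add: divide_inverse inverse_mult_distrib mult_ac)

lemma contig2:
  fixes \<tau> :: "nat \<Rightarrow> complex"
  assumes s1: "1 \<le> s" and sn: "s < n" and b: "\<beta> \<in> GammaA n"
  shows "(\<tau> n / \<theta>) * (\<tau> s * XA n (\<tau>(s := \<tau> s + 1, n := \<tau> n + 1)) (\<theta> + 1) \<beta>) =
         fps_deriv_A (n, s) (XA n \<tau> \<theta>) \<beta> + (\<Sum>r\<in>{1..<s}. zmul (s, r) (fps_deriv_A (n, r) (XA n \<tau> \<theta>)) \<beta>)"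
proof -
  define J where "J = {1..n-1}"
  define U where "U = beta_under \<beta>"
  define Ov where "Ov = beta_over n \<beta>"
  define F where "F = beta_fact n \<beta>"
  define pn where "pn = pochhammer (\<tau> n) (U n + 1)"
  define pth where "pth = pochhammer \<theta> (U n + 1)"
  define a where "a = \<tau> s - of_nat (U s)"
  define Q where "Q = (\<Prod>j\<in>J - {s}. pochhammer (\<tau> j - of_nat (U j)) (Ov j))"
  define K where "K = Q * pn / (of_nat F * pth)"
  define \<tau>' where "\<tau>' = \<tau>(s := \<tau> s + 1, n := \<tau> n + 1)"
  have fin: "finite J" and sJ: "s \<in> J" and snn: "s \<noteq> n" and nJ: "n \<notin> J"
    using s1 sn by (auto simp: J_def)
  have "XA n \<tau>' (\<theta> + 1) \<beta> = (pochhammer (\<tau>' s - of_nat (U s)) (Ov s) * Q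
        * pochhammer (\<tau>' n) (U n)) / (of_nat F * pochhammer (\<theta> + 1) (U n))"
    unfolding XA_in[OF b] J_def[symmetric] U_def[symmetric] Ov_def[symmetric] F_def[symmetric]
    by (subst prod_split1[OF fin sJ, where g = "\<lambda>j. pochhammer (\<tau> j - of_nat (U j)) (Ov j)"])
       (use nJ in \<open>auto simp: \<tau>'_def Q_def\<close>)
  also have "\<dots> = (pochhammer (a + 1) (Ov s) * Q
        * pochhammer (\<tau> n + 1) (U n)) / (of_nat F * pochhammer (\<theta> + 1) (U n))"
    using snn by (simp add: \<tau>'_def a_def algebra_simps)
  finally have L0: "XA n \<tau>' (\<theta> + 1) \<beta> = (pochhammer (a + 1) (Ov s) * Q
        * pochhammer (\<tau> n + 1) (U n)) / (of_nat F * pochhammer (\<theta> + 1) (U n))" .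
  have L: "(\<tau> n / \<theta>) * XA n \<tau>' (\<theta> + 1) \<beta> = pochhammer (a + 1) (Ov s) * K"
    unfolding L0 fid3 K_def pn_def pth_def by (simp add: pochhammer_rec)

  define \<beta>1 where "\<beta>1 = \<beta>((n, s) := \<beta> (n, s) + 1)"
  have pidx: "(n, s) \<in> idxA n" using s1 sn by (auto simp: idxA_def)
  have b1: "\<beta>1 \<in> GammaA n" unfolding \<beta>1_def using GammaA_upd[OF pidx] b by simp
  have U1: "beta_under \<beta>1 j = U j + (if j = n then 1 else 0)" for j
    unfolding \<beta>1_def U_def under_inc using s1 sn by auto
  have O1: "beta_over n \<beta>1 j = Ov j + (if j = s then 1 else 0)" for j
    unfolding \<beta>1_def Ov_def over_inc using s1 sn by auto
  have F1: "beta_fact n \<beta>1 = F * (\<beta> (n, s) + 1)"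
    unfolding \<beta>1_def F_def using fact_inc[OF pidx] .
  have "XA n \<tau> \<theta> \<beta>1 = (pochhammer (\<tau> s - of_nat (U s)) (Ov s + 1) * Q
        * pn) / (of_nat (F * (\<beta> (n, s) + 1)) * pth)"
    unfolding XA_in[OF b1] J_def[symmetric] U1 O1 F1
    by (subst prod_split1[OF fin sJ, where g = "\<lambda>j. pochhammer (\<tau> j - of_nat (U j)) (Ov j)"])
       (use snn nJ in \<open>auto simp: Q_def pn_def pth_def\<close>)
  also have "\<dots> = pochhammer a (Ov s + 1) * K / of_nat (\<beta> (n, s) + 1)"
    by (simp add: a_def K_def algebra_simps)
  moreover have nz: "1 + (of_nat (\<beta> (n, s)) :: complex) \<noteq> 0" by (metis of_nat_Suc of_nat_neq_0)
  ultimately have A: "fps_deriv_A (n, s) (XA n \<tau> \<theta>) \<beta> = pochhammer a (Ov s + 1) * K"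
    unfolding fps_deriv_A_def \<beta>1_def[symmetric] by simp

  have B: "zmul (s, r) (fps_deriv_A (n, r) (XA n \<tau> \<theta>)) \<beta> = of_nat (\<beta> (s, r)) * (pochhammer (a + 1) (Ov s) * K)"
    if r: "r \<in> {1..<s}" for r
  proof (cases "\<beta> (s, r) = 0")
    case True then show ?thesis by (simp add: zmul_def)
  next
    case False
    then have bsr: "1 \<le> \<beta> (s, r)" by simp
    define \<gamma> where "\<gamma> = \<beta>((s, r) := \<beta> (s, r) - 1)"
    define \<beta>2 where "\<beta>2 = \<gamma>((n, r) := \<gamma> (n, r) + 1)"
    have sidx: "(s, r) \<in> idxA n" and tidx: "(n, r) \<in> idxA n" using r sn by (auto simp: idxA_def)
    have gb: "\<gamma> \<in> GammaA n" unfolding \<gamma>_def using GammaA_upd[OF sidx] b by simp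
    have b2: "\<beta>2 \<in> GammaA n" unfolding \<beta>2_def using GammaA_upd[OF tidx] gb by simp
    have gtr: "\<gamma> (n, r) = \<beta> (n, r)" using snn by (simp add: \<gamma>_def)
    have Ug: "beta_under \<gamma> j + (if j = s then 1 else 0) = U j" for j
      unfolding \<gamma>_def U_def using under_dec[of \<beta> s r j, OF bsr] r by auto
    have U2: "beta_under \<beta>2 j = beta_under \<gamma> j + (if j = n then 1 else 0)" for j
      unfolding \<beta>2_def under_inc using r sn by auto
    have Og: "beta_over n \<gamma> j + (if j = r then 1 else 0) = Ov j" for j
      unfolding \<gamma>_def Ov_def using over_dec[of \<beta> s r n j, OF bsr] r sn by auto
    have O2: "beta_over n \<beta>2 j = Ov j" for j
      unfolding \<beta>2_def over_inc using Og[of j] r sn by auto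
    have Fg: "beta_fact n \<gamma> * \<beta> (s, r) = F"
      unfolding \<gamma>_def F_def by (rule fact_dec[of \<beta> s r n, OF bsr sidx])
    have F2: "beta_fact n \<beta>2 = beta_fact n \<gamma> * (\<beta> (n, r) + 1)"
      unfolding \<beta>2_def using fact_inc[OF tidx, of \<gamma>] gtr by simp
    have U2s: "beta_under \<beta>2 s = beta_under \<gamma> s" and U2n: "beta_under \<beta>2 n = U n + 1"
      using U2[of s] U2[of n] Ug[of n] snn by auto
    have U2o: "beta_under \<beta>2 j = U j" if "j \<in> J - {s}" for j
      using U2[of j] Ug[of j] that nJ by auto
    have Usg: "of_nat (U s) = (of_nat (beta_under \<gamma> s) :: complex) + 1"
    proof -
      have "U s = beta_under \<gamma> s + 1" using Ug[of s] by simp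
      then show ?thesis by simp
    qed
    have "XA n \<tau> \<theta> \<beta>2 = (pochhammer (\<tau> s - of_nat (beta_under \<gamma> s)) (Ov s) * Q
        * pn) / (of_nat (beta_fact n \<gamma> * (\<beta> (n, r) + 1)) * pth)"
      unfolding XA_in[OF b2] J_def[symmetric] O2 F2 U2n
      by (subst prod_split1[OF fin sJ, where g = "\<lambda>j. pochhammer (\<tau> j - of_nat (U j)) (Ov j)"])
         (use U2o U2s in \<open>auto simp: Q_def pn_def pth_def\<close>)
    also have "\<dots> = pochhammer (a + 1) (Ov s) * K * of_nat (\<beta> (s, r)) / of_nat (\<beta> (n, r) + 1)"
    proof -
      have e1: "\<tau> s - of_nat (beta_under \<gamma> s) = a + 1" using Usg by (simp add: a_def)
      have e3: "(of_nat F :: complex) = of_nat (beta_fact n \<gamma>) * of_nat (\<beta> (s, r))"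
        using Fg by (metis of_nat_mult)
      have nz0: "(of_nat (\<beta> (s, r)) :: complex) \<noteq> 0" using False by simp
      show ?thesis unfolding e1 K_def e3 of_nat_mult
        by (rule fid2[OF nz0])
    qed
    finally have X2: "XA n \<tau> \<theta> \<beta>2 = pochhammer (a + 1) (Ov s) * K * of_nat (\<beta> (s, r)) / of_nat (\<beta> (n, r) + 1)" .
    have nz: "(of_nat (\<beta> (n, r) + 1) :: complex) \<noteq> 0" by (metis of_nat_Suc of_nat_neq_0 Suc_eq_plus1)
    have "zmul (s, r) (fps_deriv_A (n, r) (XA n \<tau> \<theta>)) \<beta> = fps_deriv_A (n, r) (XA n \<tau> \<theta>) \<gamma>"
      using bsr unfolding zmul_def \<gamma>_def by simp
    also have "\<dots> = of_nat (\<gamma> (n, r) + 1) * XA n \<tau> \<theta> \<beta>2"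
      unfolding fps_deriv_A_def \<beta>2_def ..
    also have "\<dots> = of_nat (\<beta> (n, r) + 1) * XA n \<tau> \<theta> \<beta>2" using gtr by simp
    also have "\<dots> = of_nat (\<beta> (s, r)) * (pochhammer (a + 1) (Ov s) * K)"
      unfolding X2 using nz by (simp add: field_simps)
    finally show ?thesis .
  qed
  have "(\<Sum>r\<in>{1..<s}. zmul (s, r) (fps_deriv_A (n, r) (XA n \<tau> \<theta>)) \<beta>)
      = (\<Sum>r\<in>{1..<s}. of_nat (\<beta> (s, r)) * (pochhammer (a + 1) (Ov s) * K))"
    using B by (rule sum.cong[OF refl])
  also have "\<dots> = of_nat (U s) * (pochhammer (a + 1) (Ov s) * K)"
    by (simp add: U_def beta_under_def sum_distrib_right)
  finally have S: "(\<Sum>r\<in>{1..<s}. zmul (s, r) (fps_deriv_A (n, r) (XA n \<tau> \<theta>)) \<beta>)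
      = of_nat (U s) * (pochhammer (a + 1) (Ov s) * K)" .
  have "(\<tau> n / \<theta>) * (\<tau> s * XA n \<tau>' (\<theta> + 1) \<beta>) = \<tau> s * ((\<tau> n / \<theta>) * XA n \<tau>' (\<theta> + 1) \<beta>)"
    by (simp add: mult_ac)
  also have "\<dots> = (a + of_nat (U s)) * pochhammer (a + 1) (Ov s) * K"
    unfolding L by (simp add: a_def)
  also have "\<dots> = pochhammer a (Ov s + 1) * K + of_nat (U s) * (pochhammer (a + 1) (Ov s) * K)"
    by (simp add: pochhammer_rec algebra_simps)
  finally show ?thesis unfolding A S \<tau>'_def .
qed


lemma mult_scale_right: "fps_mult_A F (fps_scale_A c G) \<beta> = c * fps_mult_A F G \<beta>"
  unfolding fps_mult_A_def fps_scale_A_def by (simp add: sum_distrib_left mult_ac)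

lemma path_exp_Gamma:
  assumes m: "ms \<in> paths s r" and s1: "1 \<le> s" and rn: "r \<le> n"
  shows "path_exp ms \<in> GammaA n"
proof (unfold GammaA_def mem_Collect_eq, intro allI impI)
  fix p assume nz0: "path_exp ms p \<noteq> 0"
  obtain j k where p: "p = (j, k)" by (cases p)
  have nz: "path_exp ms (j, k) \<noteq> 0" using nz0 p by simp
  have mem: "(k, j) \<in> set (zip ms (tl ms))"
  proof (rule ccontr)
    assume "(k, j) \<notin> set (zip ms (tl ms))"
    then have "filter (\<lambda>e. e = (k, j)) (zip ms (tl ms)) = []" unfolding filter_empty_conv by blast
    then show False using nz by (simp add: path_exp_def)
  qed
  have so: "sorted_wrt (<) ms" using m by (simp add: paths_def)
  have kj: "k < j" by (rule zip_tl_lt[OF so mem])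
  have "k \<in> set ms" "j \<in> set ms" using zip_tl_set[OF mem] by auto
  then have "s \<le> k" "j \<le> r" using paths_range[OF m] by auto
  then show "p \<in> idxA n" using kj s1 rn p by (simp add: idxA_def)
qed

lemma path_poly_nz:
  assumes "path_poly s r \<gamma> \<noteq> 0"
  shows "\<exists>ms\<in>paths s r. path_exp ms = \<gamma>"
proof (rule ccontr)
  assume "\<not> ?thesis"
  then have e: "{ms \<in> paths s r. path_exp ms = \<gamma>} = {}" by blast
  have "path_poly s r \<gamma> = 0" unfolding path_poly_def e by simp
  then show False using assms by simp
qed

lemma mult_path_notin:
  assumes s1: "1 \<le> s" and rn: "r \<le> n" and nb: "\<beta> \<notin> GammaA n"
  shows "fps_mult_A (path_poly s r) (XA n \<tau> \<theta>) \<beta> = 0"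
  unfolding fps_mult_A_def
proof (rule sum.neutral, rule ballI)
  fix \<gamma> assume g: "\<gamma> \<in> {\<gamma>. \<forall>p. \<gamma> p \<le> \<beta> p}"
  show "path_poly s r \<gamma> * XA n \<tau> \<theta> (\<lambda>p. \<beta> p - \<gamma> p) = 0"
  proof (cases "path_poly s r \<gamma> = 0")
    case False
    then obtain ms where "ms \<in> paths s r" "path_exp ms = \<gamma>" using path_poly_nz by blast
    then have gG: "\<gamma> \<in> GammaA n" using path_exp_Gamma s1 rn by blast
    obtain q where q: "\<beta> q \<noteq> 0" "q \<notin> idxA n" using nb by (auto simp: GammaA_def)
    have "\<gamma> q = 0" using gG q(2) unfolding GammaA_def by blast
    then have "(\<lambda>p. \<beta> p - \<gamma> p) q \<noteq> 0" using q by simp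
    then have "(\<lambda>p. \<beta> p - \<gamma> p) \<notin> GammaA n" using q(2) unfolding GammaA_def by blast
    then show ?thesis by (simp add: XA_def)
  qed simp
qed

theorem theorem5p1:
  fixes n :: nat and \<tau> :: "nat \<Rightarrow> complex" and \<theta> :: complex
  assumes "n \<ge> 2"
    and "\<forall>m::nat. \<theta> \<noteq> - of_nat m"
  shows "(\<forall>r1 r2. 1 \<le> r1 \<and> r1 < r2 \<and> r2 \<le> n - 1 \<longrightarrow>
            fps_deriv_A (r2, r1) (XA n \<tau> \<theta>) =
            fps_sum_A (\<lambda>s. fps_scale_A (\<tau> s)
                (fps_mult_A (path_poly s r1) (XA_shift n \<tau> \<theta> s r2))) {1..r1})
       \<and> (\<forall>r. 1 \<le> r \<and> r \<le> n - 1 \<longrightarrow>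
            fps_deriv_A (n, r) (XA n \<tau> \<theta>) =
            fps_scale_A (\<tau> n / \<theta>)
              (fps_sum_A (\<lambda>s. fps_scale_A (\<tau> s)
                (fps_mult_A (path_poly s r) (XA_shift_n n \<tau> \<theta> s))) {1..r}))"
proof (intro conjI allI impI)
  fix r1 r2 assume h: "1 \<le> r1 \<and> r1 < r2 \<and> r2 \<le> n - 1"
  then have r1: "1 \<le> r1" and r12: "r1 < r2" and r2n: "r2 < n" using assms(1) by auto
  have pidx: "(r2, r1) \<in> idxA n" using r1 r12 r2n by (auto simp: idxA_def)
  show "fps_deriv_A (r2, r1) (XA n \<tau> \<theta>) =
            fps_sum_A (\<lambda>s. fps_scale_A (\<tau> s)
                (fps_mult_A (path_poly s r1) (XA_shift n \<tau> \<theta> s r2))) {1..r1}"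
  proof
    fix \<beta>
    show "fps_deriv_A (r2, r1) (XA n \<tau> \<theta>) \<beta> =
            fps_sum_A (\<lambda>s. fps_scale_A (\<tau> s)
                (fps_mult_A (path_poly s r1) (XA_shift n \<tau> \<theta> s r2))) {1..r1} \<beta>"
    proof (cases "\<beta> \<in> GammaA n")
      case True
      have "fps_deriv_A (r2, r1) (XA n \<tau> \<theta>) \<beta> =
          (\<Sum>s\<in>{1..r1}. fps_mult_A (path_poly s r1) (fps_scale_A (\<tau> s) (XA_shift n \<tau> \<theta> s r2)) \<beta>)"
      proof (rule inversion[where t = r2 and n = n and D = "\<lambda>r. fps_deriv_A (r2, r) (XA n \<tau> \<theta>)"])
        fix s \<beta>' assume "1 \<le> s" "s < r2" "\<beta>' \<in> GammaA n"
        then show "fps_scale_A (\<tau> s) (XA_shift n \<tau> \<theta> s r2) \<beta>' =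
          fps_deriv_A (r2, s) (XA n \<tau> \<theta>) \<beta>' + (\<Sum>r\<in>{1..<s}. zmul (s, r) (fps_deriv_A (r2, r) (XA n \<tau> \<theta>)) \<beta>')"
          using contig1[of s r2 n \<beta>' \<tau> \<theta>] r2n by (simp add: fps_scale_A_def XA_shift_def)
      qed (use r1 r12 True in auto)
      then show ?thesis by (simp add: fps_sum_A_def fps_scale_A_def mult_scale_right)
    next
      case False
      have "fps_deriv_A (r2, r1) (XA n \<tau> \<theta>) \<beta> = 0"
        using False GammaA_upd[OF pidx] by (simp add: fps_deriv_A_def XA_def)
      moreover have "fps_mult_A (path_poly s r1) (XA_shift n \<tau> \<theta> s r2) \<beta> = 0" if "s \<in> {1..r1}" for s
        unfolding XA_shift_def using that r12 r2n False by (intro mult_path_notin) auto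
      ultimately show ?thesis by (simp add: fps_sum_A_def fps_scale_A_def)
    qed
  qed
next
  fix r assume h: "1 \<le> r \<and> r \<le> n - 1"
  then have r1: "1 \<le> r" and rn: "r < n" using assms(1) by auto
  have pidx: "(n, r) \<in> idxA n" using r1 rn by (auto simp: idxA_def)
  show "fps_deriv_A (n, r) (XA n \<tau> \<theta>) =
            fps_scale_A (\<tau> n / \<theta>)
              (fps_sum_A (\<lambda>s. fps_scale_A (\<tau> s)
                (fps_mult_A (path_poly s r) (XA_shift_n n \<tau> \<theta> s))) {1..r})"
  proof
    fix \<beta>
    show "fps_deriv_A (n, r) (XA n \<tau> \<theta>) \<beta> =
            fps_scale_A (\<tau> n / \<theta>)
              (fps_sum_A (\<lambda>s. fps_scale_A (\<tau> s)
                (fps_mult_A (path_poly s r) (XA_shift_n n \<tau> \<theta> s))) {1..r}) \<beta>"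
    proof (cases "\<beta> \<in> GammaA n")
      case True
      have "fps_deriv_A (n, r) (XA n \<tau> \<theta>) \<beta> =
          (\<Sum>s\<in>{1..r}. fps_mult_A (path_poly s r) (fps_scale_A (\<tau> n / \<theta>) (fps_scale_A (\<tau> s) (XA_shift_n n \<tau> \<theta> s))) \<beta>)"
      proof (rule inversion[where t = n and n = n and D = "\<lambda>r. fps_deriv_A (n, r) (XA n \<tau> \<theta>)"])
        fix s \<beta>' assume "1 \<le> s" "s < n" "\<beta>' \<in> GammaA n"
        then show "fps_scale_A (\<tau> n / \<theta>) (fps_scale_A (\<tau> s) (XA_shift_n n \<tau> \<theta> s)) \<beta>' =
          fps_deriv_A (n, s) (XA n \<tau> \<theta>) \<beta>' + (\<Sum>r\<in>{1..<s}. zmul (s, r) (fps_deriv_A (n, r) (XA n \<tau> \<theta>)) \<beta>')"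
          using contig2[of s n \<beta>' \<tau> \<theta>] by (simp add: fps_scale_A_def XA_shift_n_def)
      qed (use r1 rn True in auto)
      then show ?thesis by (simp add: fps_sum_A_def fps_scale_A_def mult_scale_right sum_distrib_left mult_ac)
    next
      case False
      have "fps_deriv_A (n, r) (XA n \<tau> \<theta>) \<beta> = 0"
        using False GammaA_upd[OF pidx] by (simp add: fps_deriv_A_def XA_def)
      moreover have "fps_mult_A (path_poly s r) (XA_shift_n n \<tau> \<theta> s) \<beta> = 0" if "s \<in> {1..r}" for s
        unfolding XA_shift_n_def using that rn False by (intro mult_path_notin) auto
      ultimately show ?thesis by (simp add: fps_sum_A_def fps_scale_A_def)
    qed
  qed
qed

end
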